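(* Let $Q\in\mathbb R^{3\times3}$ be symmetric positive semi-definite with eigenvalues $\lambda_1^Q,\lambda_2^Q,\lambda_3^Q$, let $\mathbb U\subset\mathbb S^2$ be a finite set, and let $\Delta_Q^*:=\min_{v\in\mathcal E(Q)}\max_{u\in\mathbb U}\Delta_Q(u,v)$ with $\Delta_Q(u,v)=u^\top\big((\mathrm{tr}(Q)-2v^\top Qv)I_3-Q+2Qvv^\top\big)u$. (1) If $\mathbb U$ contains an orthonormal basis of $\mathbb R^3$ consisting of eigenvectors of $Q$, then: if $\lambda_1^Q=\lambda_2^Q=\lambda_3^Q>0$, $\Delta_Q^*\ge\frac23\lambda_1^Q$; if $\lambda_1^Q=\lambda_2^Q\ne\lambda_3^Q$ (with $\lambda_3^Q>0$), $\Delta_Q^*\ge\min\{\lambda_1^Q+\lambda_2^Q,\lambda_3^Q\}$; if the three eigenvalues are pairwise distinct, $\Delta_Q^*\ge\mathrm{tr}(Q)-\lambda_{\max}^Q$. (2) If $\mathrm{tr}(Q)-2\lambda_{\max}^Q>0$ and $\mathbb U$ contains some three mutually orthogonal unit vectors, then $\Delta_Q^*\ge\frac23(\mathrm{tr}(Q)-2\lambda_{\max}^Q)$.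
   Context: $\mathbb S^2$ is the set of unit vectors in $\mathbb R^3$. $\mathcal E(Q)$ denotes the set of all unit eigenvectors of $Q$. $\lambda_{\max}^Q$ is the largest eigenvalue of $Q$. *)

theory Defs
  imports "HOL-Analysis.Analysis"
begin

type_synonym mat3 = "real^3^3"
type_synonym vec3 = "real^3"

definition outer :: "vec3 \<Rightarrow> vec3 \<Rightarrow> mat3" where
  "outer v w = (\<chi> i j. v $ i * w $ j)"

definition sym_psd :: "mat3 \<Rightarrow> bool" where
  "sym_psd Q \<longleftrightarrow> transpose Q = Q \<and> (\<forall>x. 0 \<le> x \<bullet> (Q *v x))"

definition eigenvalues3 :: "mat3 \<Rightarrow> real \<Rightarrow> real \<Rightarrow> real \<Rightarrow> bool" where
  "eigenvalues3 Q l1 l2 l3 \<longleftrightarrow>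
     (\<forall>x. det (x *\<^sub>R mat 1 - Q) = (x - l1) * (x - l2) * (x - l3))"

definition unit_eigvecs :: "mat3 \<Rightarrow> vec3 set" where
  "unit_eigvecs Q = {v. norm v = 1 \<and> (\<exists>c. Q *v v = c *\<^sub>R v)}"

definition DeltaQ :: "mat3 \<Rightarrow> vec3 \<Rightarrow> vec3 \<Rightarrow> real" where
  "DeltaQ Q u v = u \<bullet> ((((trace Q - 2 * (v \<bullet> (Q *v v))) *\<^sub>R mat 1) - Q
                         + 2 *\<^sub>R (Q ** outer v v)) *v u)"

definition DeltaQ_star :: "mat3 \<Rightarrow> vec3 set \<Rightarrow> real" where
  "DeltaQ_star Q U = (INF v \<in> unit_eigvecs Q. Max ((\<lambda>u. DeltaQ Q u v) ` U))"

end

theory Submission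
  imports Defs
begin


lemma E_orth:
  fixes e :: "3 \<Rightarrow> real^3"
  assumes on: "\<And>i j. e i \<bullet> e j = (if i = j then 1 else 0)"
  shows "transpose (\<chi> i. e i) ** (\<chi> i. e i) = mat 1"
proof -
  have "(\<chi> i. e i) ** transpose (\<chi> i. e i) = (mat 1 :: real^3^3)"
    by (simp add: vec_eq_iff matrix_matrix_mult_def transpose_def mat_def inner_vec_def on[symmetric])
  then show ?thesis using matrix_left_right_inverse by blast
qed

lemma E_mulv: "((\<chi> i. e i) *v x) $ i = e i \<bullet> (x::real^3)"
  by (simp add: matrix_vector_mult_def inner_vec_def mult.commute)

lemma parseval:
  fixes e :: "3 \<Rightarrow> real^3"
  assumes on: "\<And>i j. e i \<bullet> e j = (if i = j then 1 else 0)"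
  shows "x \<bullet> y = (\<Sum>i\<in>UNIV. (e i \<bullet> x) * (e i \<bullet> y))"
proof -
  let ?E = "(\<chi> i. e i) :: real^3^3"
  have "x \<bullet> y = ((transpose ?E ** ?E) *v x) \<bullet> y" using E_orth[OF on] by simp
  also have "\<dots> = (?E *v x) \<bullet> (?E *v y)"
    by (simp add: matrix_vector_mul_assoc[symmetric] dot_lmul_matrix)
  also have "\<dots> = (\<Sum>i\<in>UNIV. (e i \<bullet> x) * (e i \<bullet> y))"
    by (simp add: inner_vec_def E_mulv)
  finally show ?thesis .
qed

lemma trace_onb:
  fixes e :: "3 \<Rightarrow> real^3" and Q :: "real^3^3"
  assumes on: "\<And>i j. e i \<bullet> e j = (if i = j then 1 else 0)"
  shows "(\<Sum>i\<in>UNIV. e i \<bullet> (Q *v e i)) = trace Q"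
proof -
  let ?E = "(\<chi> i. e i) :: real^3^3"
  have "trace (?E ** (Q ** transpose ?E)) = trace ((Q ** transpose ?E) ** ?E)"
    by (rule trace_mul_sym)
  also have "\<dots> = trace Q" using E_orth[OF on] by (simp add: matrix_mul_assoc[symmetric])
  finally have t: "trace (?E ** (Q ** transpose ?E)) = trace Q" .
  have "trace (?E ** (Q ** transpose ?E)) = (\<Sum>i\<in>UNIV. e i \<bullet> (Q *v e i))"
    by (simp add: trace_def matrix_matrix_mult_def transpose_def inner_vec_def
        matrix_vector_mult_def sum_distrib_left mult.commute mult.left_commute)
  with t show ?thesis by simp
qed

lemma mat_diff_l: "(A::real^3^3) ** (B - C) = A ** B - A ** C"
  by (simp add: vec_eq_iff matrix_matrix_mult_def sum_subtractf algebra_simps)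
lemma mat_diff_r: "(B - C) ** (A::real^3^3) = B ** A - C ** A"
  by (simp add: vec_eq_iff matrix_matrix_mult_def sum_subtractf algebra_simps)

lemma charpoly_onb:
  fixes e :: "3 \<Rightarrow> real^3" and Q :: "real^3^3"
  assumes on: "\<And>i j. e i \<bullet> e j = (if i = j then 1 else 0)"
    and sym: "transpose Q = Q"
    and ev: "\<And>i. Q *v e i = a i *\<^sub>R e i"
  shows "det (x *\<^sub>R mat 1 - Q) = (\<Prod>i\<in>UNIV. x - a i)"
proof -
  let ?E = "(\<chi> i. e i) :: real^3^3"
  let ?D = "(\<chi> i j. if i = j then a i else 0) :: real^3^3"
  have EQ: "?E ** Q = ?D ** ?E"
  proof -
    have r: "(?E ** Q) $ i $ k = (Q *v e i) $ k" for i k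
    proof -
      have "(?E ** Q) $ i $ k = (e i v* Q) $ k"
        by (simp add: matrix_matrix_mult_def vector_matrix_mult_def)
      also have "(e i v* Q) = Q *v e i"
        by (metis sym vector_transpose_matrix)
      finally show ?thesis .
    qed
    have d: "(?D ** ?E) $ i $ k = a i * e i $ k" for i k
    proof -
      have "(?D ** ?E) $ i $ k = (\<Sum>ka\<in>UNIV. ?D $ i $ ka * ?E $ ka $ k)"
        unfolding matrix_matrix_mult_def by (simp only: vec_lambda_beta)
      also have "\<dots> = (\<Sum>ka\<in>UNIV. if ka = i then a i * e i $ k else 0)"
        by (rule sum.cong) auto
      also have "\<dots> = a i * e i $ k" by (simp add: sum.delta)
      finally show ?thesis .
    qed
    show ?thesis unfolding vec_eq_iff using ev
      by (simp only: r d) simp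
  qed
  have Qd: "Q = transpose ?E ** (?D ** ?E)"
  proof -
    have "Q = (transpose ?E ** ?E) ** Q" using E_orth[OF on] by simp
    also have "\<dots> = transpose ?E ** (?E ** Q)" by (simp add: matrix_mul_assoc)
    finally show ?thesis using EQ by simp
  qed
  have "x *\<^sub>R mat 1 - Q = transpose ?E ** ((x *\<^sub>R mat 1 - ?D) ** ?E)"
  proof -
    have 1: "(x *\<^sub>R mat 1) ** ?E = x *\<^sub>R ?E"
      by (simp add: scalar_matrix_assoc[symmetric])
    have 2: "transpose ?E ** (x *\<^sub>R ?E) = x *\<^sub>R mat 1"
      using E_orth[OF on] by (simp add: matrix_scalar_ac scalar_matrix_assoc[symmetric])
    show ?thesis
      by (subst mat_diff_r, subst mat_diff_l) (simp only: 1 2 Qd[symmetric])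
  qed
  then have "det (x *\<^sub>R mat 1 - Q) = det ?E * det ?E * det (x *\<^sub>R mat 1 - ?D)"
    by (simp add: det_mul)
  also have "det ?E * det ?E = 1"
    using E_orth[OF on] det_mul[of "transpose ?E" ?E] by simp
  also have "det (x *\<^sub>R mat 1 - ?D) = (\<Prod>i\<in>UNIV. x - a i)"
    by (subst det_diagonal) (auto simp: mat_def)
  finally show ?thesis by simp
qed


lemma outer_mulv: "((Q::real^3^3) ** outer v v) *v u = (v \<bullet> u) *\<^sub>R (Q *v v)"
  by (simp add: vec_eq_iff matrix_vector_mult_def matrix_matrix_mult_def outer_def inner_vec_def
      sum_distrib_left sum_distrib_right mult_ac) (subst sum.swap, simp add: mult_ac)

lemma Delta_eig:
  fixes Q :: "real^3^3"
  assumes ev: "Q *v v = \<mu> *\<^sub>R v" and n: "norm v = 1"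
  shows "DeltaQ Q u v = (trace Q - 2*\<mu>) * (u \<bullet> u) - u \<bullet> (Q *v u) + 2*\<mu>*(u \<bullet> v)^2"
proof -
  have vv: "v \<bullet> v = 1" using n by (simp add: dot_square_norm)
  have m: "v \<bullet> (Q *v v) = \<mu>" using ev vv by simp
  have "DeltaQ Q u v = u \<bullet> ((trace Q - 2*\<mu>) *\<^sub>R u - Q *v u + 2 *\<^sub>R ((v \<bullet> u) *\<^sub>R (Q *v v)))"
    unfolding DeltaQ_def m
    by (simp add: matrix_vector_mult_add_rdistrib matrix_vector_mult_diff_rdistrib
        matrix_scaleR_vector_ac[symmetric] outer_mulv scaleR_matrix_vector_assoc)
  also have "\<dots> = (trace Q - 2*\<mu>) * (u \<bullet> u) - u \<bullet> (Q *v u) + 2*\<mu>*(u \<bullet> v)^2"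
    using ev by (simp add: inner_diff_right inner_add_right power2_eq_square inner_commute)
  finally show ?thesis .
qed

lemma eig_root:
  fixes Q :: "real^3^3"
  assumes ev: "Q *v v = \<mu> *\<^sub>R v" and nz: "v \<noteq> 0"
  shows "det (\<mu> *\<^sub>R mat 1 - Q) = 0"
proof (rule ccontr)
  let ?A = "\<mu> *\<^sub>R mat 1 - Q"
  assume "det ?A \<noteq> 0"
  then have "invertible ?A" using invertible_det_nz by blast
  then obtain A' where A': "A' ** ?A = mat 1" unfolding invertible_def by blast
  have "?A *v v = 0" using ev
    by (simp add: matrix_vector_mult_diff_rdistrib scaleR_matrix_vector_assoc[symmetric])
  then have "(A' ** ?A) *v v = 0" by (simp add: matrix_vector_mul_assoc[symmetric])
  with A' nz show False by simp
qed

lemma eig_exists: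
  fixes Q :: "real^3^3"
  assumes "det (\<mu> *\<^sub>R mat 1 - Q) = 0"
  shows "\<exists>v. norm v = 1 \<and> Q *v v = \<mu> *\<^sub>R v"
proof -
  let ?A = "\<mu> *\<^sub>R mat 1 - Q"
  have "\<not> inj ((*v) ?A)"
    using det_nz_iff_inj[of "(*v) ?A"] assms by (simp add: matrix_vector_mul_linear matrix_of_matrix_vector_mul)
  then obtain x y where xy: "x \<noteq> y" "?A *v x = ?A *v y" unfolding inj_def by blast
  define w where "w = x - y"
  have w0: "w \<noteq> 0" using xy w_def by simp
  have "?A *v w = 0" using xy by (simp add: w_def matrix_vector_mult_diff_distrib)
  then have Qw: "Q *v w = \<mu> *\<^sub>R w"
    by (simp add: matrix_vector_mult_diff_rdistrib scaleR_matrix_vector_assoc[symmetric])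
  define v where "v = inverse (norm w) *\<^sub>R w"
  have "norm v = 1" using w0 by (simp add: v_def)
  moreover have "Q *v v = \<mu> *\<^sub>R v" using Qw
    by (simp add: v_def matrix_vector_mult_scaleR)
  ultimately show ?thesis by blast
qed



lemma c1_aux:
  fixes l c1 c2 c3 D1 D2 D3 :: real
  assumes "l > 0" "c1^2+c2^2+c3^2 = 1"
    "D1 = 2*l*c1^2" "D2 = 2*l*c2^2" "D3 = 2*l*c3^2"
  shows "2/3*l \<le> max D1 (max D2 D3)"
proof (rule ccontr)
  assume "\<not> ?thesis"
  then have "D1 < 2/3*l" "D2 < 2/3*l" "D3 < 2/3*l" by auto
  moreover have "l*c1^2 + l*c2^2 + l*c3^2 = l" using assms(2) by (metis distrib_left mult_1_right)
  ultimately show False using assms by linarith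
qed

lemma c2_aux:
  fixes p q \<mu> c1 c2 c3 D1 D2 D3 :: real
  assumes "p \<noteq> q" "0 \<le> p" "\<mu> = p \<or> \<mu> = q"
    "q \<noteq> \<mu> \<Longrightarrow> c1 = 0" "p \<noteq> \<mu> \<Longrightarrow> c2 = 0" "p \<noteq> \<mu> \<Longrightarrow> c3 = 0"
    "c1^2+c2^2+c3^2 = 1"
    "D1 = (2*p+q) - 2*\<mu> - q + 2*\<mu>*c1^2"
    "D2 = (2*p+q) - 2*\<mu> - p + 2*\<mu>*c2^2"
    "D3 = (2*p+q) - 2*\<mu> - p + 2*\<mu>*c3^2"
  shows "min (2*p) q \<le> max D1 (max D2 D3)"
  using assms(3)
proof
  assume m: "\<mu> = p"
  then have "c1 = 0" using assms by auto
  then have "p*c2^2 + p*c3^2 = p" using assms(7) by (metis add_0 distrib_left mult_1_right zero_power2)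
  moreover have "D2 + D3 = 2*q - 2*p + 2*(p*c2^2 + p*c3^2)" using assms(9,10) m by (simp add: algebra_simps)
  ultimately have "D2 + D3 = 2*q" by simp
  then show ?thesis by linarith
next
  assume m: "\<mu> = q"
  then have "c2 = 0" "c3 = 0" using assms by auto
  then have "c1^2 = 1" using assms(7) by simp
  then have "D1 = 2*p" using assms m by simp
  then show ?thesis by linarith
qed

lemma c3_aux:
  fixes M tr \<mu> c1 c2 c3 D1 :: real
  assumes "c2 = 0" "c3 = 0" "c1^2+c2^2+c3^2 = 1" "\<mu> \<le> M"
    "D1 = tr - 2*\<mu> - \<mu> + 2*\<mu>*c1^2"
  shows "tr - M \<le> D1"
proof -
  have "c1^2 = 1" using assms by simp
  then show ?thesis using assms by simp
qed



lemma prod_3: "prod f (UNIV::3 set) = f 1 * f 2 * f 3"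
  unfolding UNIV_3 by (simp add: ac_simps)

lemma sym_inner: "transpose (Q::real^3^3) = Q \<Longrightarrow> x \<bullet> (Q *v y) = (Q *v x) \<bullet> y"
  by (metis dot_lmul_matrix vector_transpose_matrix)

lemma star_ge:
  assumes "unit_eigvecs Q \<noteq> {}"
    and "\<And>v. v \<in> unit_eigvecs Q \<Longrightarrow> b \<le> Max ((\<lambda>u. DeltaQ Q u v) ` U)"
  shows "b \<le> DeltaQ_star Q U"
  unfolding DeltaQ_star_def using assms by (intro cInf_greatest) auto

lemma max_ge: "finite U \<Longrightarrow> u \<in> U \<Longrightarrow> DeltaQ Q u v \<le> Max ((\<lambda>u. DeltaQ Q u v) ` U)"
  by (rule Max_ge) auto

lemma poly_facts:
  fixes a1 a2 a3 l1 l2 l3 :: real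
  assumes p: "\<And>x. (x-a1)*(x-a2)*(x-a3) = (x-l1)*(x-l2)*(x-l3)"
  shows "a1+a2+a3 = l1+l2+l3" "a1 \<in> {l1,l2,l3}" "a2 \<in> {l1,l2,l3}" "a3 \<in> {l1,l2,l3}"
    "l1 \<noteq> l2 \<and> l1 \<noteq> l3 \<and> l2 \<noteq> l3 \<Longrightarrow> a1 \<noteq> a2 \<and> a1 \<noteq> a3 \<and> a2 \<noteq> a3"
proof -
  have h0: "(0-a1)*(0-a2)*(0-a3) = (0-l1)*(0-l2)*(0-l3)" by (rule p)
  have h1: "(1-a1)*(1-a2)*(1-a3) = (1-l1)*(1-l2)*(1-l3)" by (rule p)
  have hm: "(-1-a1)*(-1-a2)*(-1-a3) = (-1-l1)*(-1-l2)*(-1-l3)" by (rule p)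
  have "\<And>b1 b2 b3::real. (1-b1)*(1-b2)*(1-b3) + (-1-b1)*(-1-b2)*(-1-b3) - 2*((0-b1)*(0-b2)*(0-b3))
        = -2*(b1+b2+b3)" by algebra
  from this[of a1 a2 a3] this[of l1 l2 l3] h0 h1 hm show "a1+a2+a3 = l1+l2+l3" by simp
  have r: "b \<in> {l1,l2,l3}" if "b = a1 \<or> b = a2 \<or> b = a3" for b
  proof -
    have "(b-a1)*(b-a2)*(b-a3) = 0" using that by auto
    then have "(b-l1)*(b-l2)*(b-l3) = 0" using p by metis
    then show ?thesis by auto
  qed
  show "a1 \<in> {l1,l2,l3}" "a2 \<in> {l1,l2,l3}" "a3 \<in> {l1,l2,l3}" using r by auto
  assume d: "l1 \<noteq> l2 \<and> l1 \<noteq> l3 \<and> l2 \<noteq> l3"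
  have s: "l \<in> {a1,a2,a3}" if "l = l1 \<or> l = l2 \<or> l = l3" for l
  proof -
    have "(l-l1)*(l-l2)*(l-l3) = 0" using that by auto
    then have "(l-a1)*(l-a2)*(l-a3) = 0" using p by metis
    then show ?thesis by auto
  qed
  have "l1 \<in> {a1,a2,a3}" "l2 \<in> {a1,a2,a3}" "l3 \<in> {a1,a2,a3}" using s by auto
  then show "a1 \<noteq> a2 \<and> a1 \<noteq> a3 \<and> a2 \<noteq> a3" using d by auto
qed


lemma part1:
  fixes Q :: "real^3^3"
  assumes sym: "transpose Q = Q" and psd: "\<And>x. 0 \<le> x \<bullet> (Q *v x)"
    and ev3: "eigenvalues3 Q l1 l2 l3" and fin: "finite U"
    and U: "e1 \<in> U" "e2 \<in> U" "e3 \<in> U"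
    and E: "e1 \<in> unit_eigvecs Q" "e2 \<in> unit_eigvecs Q" "e3 \<in> unit_eigvecs Q"
    and o: "e1 \<bullet> e2 = 0" "e1 \<bullet> e3 = 0" "e2 \<bullet> e3 = 0"
  shows "(l1 = l2 \<and> l2 = l3 \<and> l1 > 0 \<longrightarrow> DeltaQ_star Q U \<ge> 2/3 * l1) \<and>
            (l1 = l2 \<and> l1 \<noteq> l3 \<and> l3 > 0 \<longrightarrow> DeltaQ_star Q U \<ge> min (l1 + l2) l3) \<and>
            (l1 \<noteq> l2 \<and> l1 \<noteq> l3 \<and> l2 \<noteq> l3 \<longrightarrow>
               DeltaQ_star Q U \<ge> trace Q - Max {l1, l2, l3})"
proof -
  obtain a1 a2 a3 where ev: "Q *v e1 = a1 *\<^sub>R e1" "Q *v e2 = a2 *\<^sub>R e2" "Q *v e3 = a3 *\<^sub>R e3"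
    using E unfolding unit_eigvecs_def by blast
  have n: "e1 \<bullet> e1 = 1" "e2 \<bullet> e2 = 1" "e3 \<bullet> e3 = 1"
    using E unfolding unit_eigvecs_def by (auto simp: dot_square_norm)
  define e where "e = (\<lambda>i::3. if i = 1 then e1 else if i = 2 then e2 else e3)"
  define a where "a = (\<lambda>i::3. if i = 1 then a1 else if i = 2 then a2 else a3)"
  have on: "e i \<bullet> e j = (if i = j then 1 else 0)" for i j
    using exhaust_3[of i] exhaust_3[of j] n o by (auto simp: e_def inner_commute)
  have eva: "Q *v e i = a i *\<^sub>R e i" for i
    using exhaust_3[of i] ev by (auto simp: e_def a_def)
  have poly: "(x-a1)*(x-a2)*(x-a3) = (x-l1)*(x-l2)*(x-l3)" for x
    using charpoly_onb[OF on sym eva, of x] ev3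
    unfolding eigenvalues3_def by (simp add: prod_3 a_def)
  note pf = poly_facts[OF poly]
  have tr: "trace Q = a1 + a2 + a3"
    using trace_onb[OF on, of Q] by (simp add: sum_3 e_def ev n)
  have apos: "0 \<le> a1" "0 \<le> a2" "0 \<le> a3"
    using psd[of e1] psd[of e2] psd[of e3] by (simp_all add: ev n)
  have main: "P (max (DeltaQ Q e1 v) (max (DeltaQ Q e2 v) (DeltaQ Q e3 v)))"
    if v: "v \<in> unit_eigvecs Q" and 
      H: "\<And>\<mu> c1 c2 c3. \<lbrakk>Q *v v = \<mu> *\<^sub>R v; 0 \<le> \<mu>; \<mu> = a1 \<or> \<mu> = a2 \<or> \<mu> = a3;
          a1 \<noteq> \<mu> \<Longrightarrow> c1 = 0; a2 \<noteq> \<mu> \<Longrightarrow> c2 = 0; a3 \<noteq> \<mu> \<Longrightarrow> c3 = 0;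
          c1^2 + c2^2 + c3^2 = 1\<rbrakk> \<Longrightarrow>
          P (max (trace Q - 2*\<mu> - a1 + 2*\<mu>*c1^2) (max (trace Q - 2*\<mu> - a2 + 2*\<mu>*c2^2)
              (trace Q - 2*\<mu> - a3 + 2*\<mu>*c3^2)))"
    for v P
  proof -
    obtain \<mu> where m: "Q *v v = \<mu> *\<^sub>R v" and nv: "norm v = 1"
      using v unfolding unit_eigvecs_def by blast
    have vv: "v \<bullet> v = 1" using nv by (simp add: dot_square_norm)
    have mpos: "0 \<le> \<mu>" using psd[of v] m vv by simp
    have cs: "(e1 \<bullet> v)^2 + (e2 \<bullet> v)^2 + (e3 \<bullet> v)^2 = 1"
      using parseval[OF on, of v v] vv by (simp add: sum_3 e_def power2_eq_square)
    have oc: "(a i - \<mu>) * (e i \<bullet> v) = 0" for i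
    proof -
      have "e i \<bullet> (Q *v v) = (Q *v e i) \<bullet> v" by (rule sym_inner[OF sym])
      then show ?thesis using m eva[of i] by (auto simp: algebra_simps)
    qed
    have oc1: "a1 \<noteq> \<mu> \<Longrightarrow> e1 \<bullet> v = 0" using oc[of 1] by (simp add: a_def e_def)
    have oc2: "a2 \<noteq> \<mu> \<Longrightarrow> e2 \<bullet> v = 0" using oc[of 2] by (simp add: a_def e_def)
    have oc3: "a3 \<noteq> \<mu> \<Longrightarrow> e3 \<bullet> v = 0" using oc[of 3] by (simp add: a_def e_def)
    have mu: "\<mu> = a1 \<or> \<mu> = a2 \<or> \<mu> = a3"
    proof (rule ccontr)
      assume "\<not> ?thesis"
      then show False using oc1 oc2 oc3 cs by auto
    qed
    have D: "DeltaQ Q e1 v = trace Q - 2*\<mu> - a1 + 2*\<mu>*(e1 \<bullet> v)^2"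
      "DeltaQ Q e2 v = trace Q - 2*\<mu> - a2 + 2*\<mu>*(e2 \<bullet> v)^2"
      "DeltaQ Q e3 v = trace Q - 2*\<mu> - a3 + 2*\<mu>*(e3 \<bullet> v)^2"
      using Delta_eig[OF m nv] by (simp_all add: n ev)
    show ?thesis unfolding D by (rule H[OF m mpos mu oc1 oc2 oc3 cs])
  qed
  have nonempty: "unit_eigvecs Q \<noteq> {}" using E by auto
  have MX: "max (DeltaQ Q e1 v) (max (DeltaQ Q e2 v) (DeltaQ Q e3 v)) \<le> Max ((\<lambda>u. DeltaQ Q u v) ` U)" for v
    using max_ge[OF fin U(1)] max_ge[OF fin U(2)] max_ge[OF fin U(3)] by simp
  show ?thesis
  proof (intro conjI impI)
    assume h: "l1 = l2 \<and> l2 = l3 \<and> l1 > 0"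
    have aa: "a1 = l1" "a2 = l1" "a3 = l1" using pf(2-4) h by auto
    show "DeltaQ_star Q U \<ge> 2/3 * l1"
    proof (rule star_ge[OF nonempty])
      fix v assume v: "v \<in> unit_eigvecs Q"
      have "2/3*l1 \<le> max (DeltaQ Q e1 v) (max (DeltaQ Q e2 v) (DeltaQ Q e3 v))"
      proof (rule main[OF v])
        fix \<mu> c1 c2 c3 :: real
        assume "\<mu> = a1 \<or> \<mu> = a2 \<or> \<mu> = a3" "c1^2 + c2^2 + c3^2 = 1"
        then show "2/3*l1 \<le> max (trace Q - 2*\<mu> - a1 + 2*\<mu>*c1^2) (max (trace Q - 2*\<mu> - a2 + 2*\<mu>*c2^2)
              (trace Q - 2*\<mu> - a3 + 2*\<mu>*c3^2))"
          using h aa tr by (intro c1_aux) auto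
      qed
      then show "2/3*l1 \<le> Max ((\<lambda>u. DeltaQ Q u v) ` U)" using MX[of v] by linarith
    qed
  next
    assume h: "l1 = l2 \<and> l1 \<noteq> l3 \<and> l3 > 0"
    have cmb: "(a1 = l3 \<and> a2 = l1 \<and> a3 = l1) \<or> (a1 = l1 \<and> a2 = l3 \<and> a3 = l1) \<or> (a1 = l1 \<and> a2 = l1 \<and> a3 = l3)"
      using pf(1-4) h by auto
    have l1pos: "0 \<le> l1" using cmb apos by auto
    show "DeltaQ_star Q U \<ge> min (l1 + l2) l3"
    proof (rule star_ge[OF nonempty])
      fix v assume v: "v \<in> unit_eigvecs Q"
      have "min (l1 + l2) l3 \<le> max (DeltaQ Q e1 v) (max (DeltaQ Q e2 v) (DeltaQ Q e3 v))"
      proof (rule main[OF v])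
        fix \<mu> c1 c2 c3 :: real
        assume m: "\<mu> = a1 \<or> \<mu> = a2 \<or> \<mu> = a3" "a1 \<noteq> \<mu> \<Longrightarrow> c1 = 0" "a2 \<noteq> \<mu> \<Longrightarrow> c2 = 0"
          "a3 \<noteq> \<mu> \<Longrightarrow> c3 = 0" "c1^2 + c2^2 + c3^2 = 1"
        let ?D1 = "trace Q - 2*\<mu> - a1 + 2*\<mu>*c1^2"
        let ?D2 = "trace Q - 2*\<mu> - a2 + 2*\<mu>*c2^2"
        let ?D3 = "trace Q - 2*\<mu> - a3 + 2*\<mu>*c3^2"
        have t: "trace Q = 2*l1 + l3" using tr pf(1) h by simp
        from cmb show "min (l1 + l2) l3 \<le> max ?D1 (max ?D2 ?D3)"
        proof (elim disjE conjE)
          assume "a1 = l3" "a2 = l1" "a3 = l1"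
          then have "min (2*l1) l3 \<le> max ?D1 (max ?D2 ?D3)"
            using m h l1pos by (intro c2_aux[of l1 l3 \<mu> c1 c2 c3]) (auto simp: t)
          then show ?thesis using h by simp
        next
          assume "a1 = l1" "a2 = l3" "a3 = l1"
          then have "min (2*l1) l3 \<le> max ?D2 (max ?D1 ?D3)"
            using m h l1pos by (intro c2_aux[of l1 l3 \<mu> c2 c1 c3]) (auto simp: t)
          then show ?thesis using h by (simp add: max.left_commute)
        next
          assume "a1 = l1" "a2 = l1" "a3 = l3"
          then have "min (2*l1) l3 \<le> max ?D3 (max ?D1 ?D2)"
            using m h l1pos by (intro c2_aux[of l1 l3 \<mu> c3 c1 c2]) (auto simp: t)
          then show ?thesis using h by (simp add: max.commute max.left_commute)
        qed
      qed
      then show "min (l1 + l2) l3 \<le> Max ((\<lambda>u. DeltaQ Q u v) ` U)" using MX[of v] by linarith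
    qed
  next
    assume h: "l1 \<noteq> l2 \<and> l1 \<noteq> l3 \<and> l2 \<noteq> l3"
    have dis: "a1 \<noteq> a2" "a1 \<noteq> a3" "a2 \<noteq> a3" using pf(5)[OF h] by auto
    have aM: "a \<le> Max {l1,l2,l3}" if "a \<in> {l1,l2,l3}" for a using that by (intro Max_ge) auto
    show "DeltaQ_star Q U \<ge> trace Q - Max {l1, l2, l3}"
    proof (rule star_ge[OF nonempty])
      fix v assume v: "v \<in> unit_eigvecs Q"
      have "trace Q - Max {l1, l2, l3} \<le> max (DeltaQ Q e1 v) (max (DeltaQ Q e2 v) (DeltaQ Q e3 v))"
      proof (rule main[OF v])
        fix \<mu> c1 c2 c3 :: real
        assume m: "\<mu> = a1 \<or> \<mu> = a2 \<or> \<mu> = a3" "a1 \<noteq> \<mu> \<Longrightarrow> c1 = 0" "a2 \<noteq> \<mu> \<Longrightarrow> c2 = 0"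
          "a3 \<noteq> \<mu> \<Longrightarrow> c3 = 0" "c1^2 + c2^2 + c3^2 = 1"
        let ?D1 = "trace Q - 2*\<mu> - a1 + 2*\<mu>*c1^2"
        let ?D2 = "trace Q - 2*\<mu> - a2 + 2*\<mu>*c2^2"
        let ?D3 = "trace Q - 2*\<mu> - a3 + 2*\<mu>*c3^2"
        have mM: "\<mu> \<le> Max {l1,l2,l3}" using m(1) pf(2-4) aM by auto
        from m(1) show "trace Q - Max {l1, l2, l3} \<le> max ?D1 (max ?D2 ?D3)"
        proof (elim disjE)
          assume "\<mu> = a1"
          then have "trace Q - Max {l1, l2, l3} \<le> ?D1"
            using m dis mM by (intro c3_aux[of c2 c3 c1]) auto
          then show ?thesis by simp
        next
          assume "\<mu> = a2"
          then have "trace Q - Max {l1, l2, l3} \<le> ?D2"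
            using m dis mM by (intro c3_aux[of c1 c3 c2]) auto
          then show ?thesis by simp
        next
          assume "\<mu> = a3"
          then have "trace Q - Max {l1, l2, l3} \<le> ?D3"
            using m dis mM by (intro c3_aux[of c1 c2 c3]) auto
          then show ?thesis by simp
        qed
      qed
      then show "trace Q - Max {l1, l2, l3} \<le> Max ((\<lambda>u. DeltaQ Q u v) ` U)" using MX[of v] by linarith
    qed
  qed
qed


lemma part2:
  fixes Q :: "real^3^3"
  assumes sym: "transpose Q = Q" and psd: "\<And>x. 0 \<le> x \<bullet> (Q *v x)"
    and ev3: "eigenvalues3 Q l1 l2 l3" and fin: "finite U"
    and Un: "U \<subseteq> {u. norm u = 1}"
    and U: "e1 \<in> U" "e2 \<in> U" "e3 \<in> U"
    and o: "e1 \<bullet> e2 = 0" "e1 \<bullet> e3 = 0" "e2 \<bullet> e3 = 0"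
  shows "DeltaQ_star Q U \<ge> 2/3 * (trace Q - 2 * Max {l1, l2, l3})"
proof -
  let ?M = "Max {l1, l2, l3}"
  have n: "e1 \<bullet> e1 = 1" "e2 \<bullet> e2 = 1" "e3 \<bullet> e3 = 1"
    using U Un by (auto simp: dot_square_norm)
  define e where "e = (\<lambda>i::3. if i = 1 then e1 else if i = 2 then e2 else e3)"
  have on: "e i \<bullet> e j = (if i = j then 1 else 0)" for i j
    using exhaust_3[of i] exhaust_3[of j] n o by (auto simp: e_def inner_commute)
  have tr: "e1 \<bullet> (Q *v e1) + e2 \<bullet> (Q *v e2) + e3 \<bullet> (Q *v e3) = trace Q"
    using trace_onb[OF on, of Q] by (simp add: sum_3 e_def)
  have "det (l1 *\<^sub>R mat 1 - Q) = 0" using ev3 unfolding eigenvalues3_def by simp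
  then obtain v0 where "norm v0 = 1" "Q *v v0 = l1 *\<^sub>R v0" using eig_exists by blast
  then have nonempty: "unit_eigvecs Q \<noteq> {}" unfolding unit_eigvecs_def by blast
  show ?thesis
  proof (rule star_ge[OF nonempty])
    fix v assume v: "v \<in> unit_eigvecs Q"
    obtain \<mu> where m: "Q *v v = \<mu> *\<^sub>R v" and nv: "norm v = 1"
      using v unfolding unit_eigvecs_def by blast
    have vv: "v \<bullet> v = 1" using nv by (simp add: dot_square_norm)
    have "det (\<mu> *\<^sub>R mat 1 - Q) = 0" using eig_root[OF m] nv by (metis norm_zero zero_neq_one)
    then have "(\<mu> - l1) * (\<mu> - l2) * (\<mu> - l3) = 0" using ev3 unfolding eigenvalues3_def by simp
    then have "\<mu> \<in> {l1,l2,l3}" by auto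
    then have mM: "\<mu> \<le> ?M" by (intro Max_ge) auto
    have cs: "(e1 \<bullet> v)^2 + (e2 \<bullet> v)^2 + (e3 \<bullet> v)^2 = 1"
      using parseval[OF on, of v v] vv by (simp add: sum_3 e_def power2_eq_square)
    have D: "DeltaQ Q e1 v = trace Q - 2*\<mu> - e1 \<bullet> (Q *v e1) + 2*\<mu>*(e1 \<bullet> v)^2"
      "DeltaQ Q e2 v = trace Q - 2*\<mu> - e2 \<bullet> (Q *v e2) + 2*\<mu>*(e2 \<bullet> v)^2"
      "DeltaQ Q e3 v = trace Q - 2*\<mu> - e3 \<bullet> (Q *v e3) + 2*\<mu>*(e3 \<bullet> v)^2"
      using Delta_eig[OF m nv] by (simp_all add: n)
    have "\<mu>*(e1 \<bullet> v)^2 + \<mu>*(e2 \<bullet> v)^2 + \<mu>*(e3 \<bullet> v)^2 = \<mu>"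
      using cs by (metis distrib_left mult_1_right)
    then have S: "DeltaQ Q e1 v + DeltaQ Q e2 v + DeltaQ Q e3 v = 2 * trace Q - 4*\<mu>"
      using D tr by linarith
    have "DeltaQ Q e1 v \<le> Max ((\<lambda>u. DeltaQ Q u v) ` U)"
      "DeltaQ Q e2 v \<le> Max ((\<lambda>u. DeltaQ Q u v) ` U)"
      "DeltaQ Q e3 v \<le> Max ((\<lambda>u. DeltaQ Q u v) ` U)"
      using max_ge[OF fin U(1)] max_ge[OF fin U(2)] max_ge[OF fin U(3)] by auto
    then show "2/3 * (trace Q - 2 * ?M) \<le> Max ((\<lambda>u. DeltaQ Q u v) ` U)"
    proof -
      have "\<And>X M T d1 d2 d3 m :: real. d1 \<le> X \<Longrightarrow> d2 \<le> X \<Longrightarrow> d3 \<le> X \<Longrightarrow>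
          d1 + d2 + d3 = 2*T - 4*m \<Longrightarrow> m \<le> M \<Longrightarrow> 2/3 * (T - 2*M) \<le> X"
      proof -
        fix X M T d1 d2 d3 m :: real
        assume "d1 \<le> X" "d2 \<le> X" "d3 \<le> X" "d1 + d2 + d3 = 2*T - 4*m" "m \<le> M"
        then have "2*T - 4*M \<le> 3*X" by linarith
        then show "2/3 * (T - 2*M) \<le> X" by (simp add: field_simps)
      qed
      then show ?thesis using S mM \<open>DeltaQ Q e1 v \<le> _\<close> \<open>DeltaQ Q e2 v \<le> _\<close> \<open>DeltaQ Q e3 v \<le> _\<close>
        by blast
    qed
  qed
qed

theorem lemma2:
  fixes Q :: "real^3^3" and U :: "(real^3) set" and l1 l2 l3 :: real
  assumes "sym_psd Q"
    and "eigenvalues3 Q l1 l2 l3"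
    and "finite U"
    and "U \<subseteq> {u. norm u = 1}"
  shows "((\<exists>e1\<in>U. \<exists>e2\<in>U. \<exists>e3\<in>U.
             e1 \<in> unit_eigvecs Q \<and> e2 \<in> unit_eigvecs Q \<and> e3 \<in> unit_eigvecs Q \<and>
             e1 \<bullet> e2 = 0 \<and> e1 \<bullet> e3 = 0 \<and> e2 \<bullet> e3 = 0) \<longrightarrow>
           ((l1 = l2 \<and> l2 = l3 \<and> l1 > 0 \<longrightarrow> DeltaQ_star Q U \<ge> 2/3 * l1) \<and>
            (l1 = l2 \<and> l1 \<noteq> l3 \<and> l3 > 0 \<longrightarrow> DeltaQ_star Q U \<ge> min (l1 + l2) l3) \<and>
            (l1 \<noteq> l2 \<and> l1 \<noteq> l3 \<and> l2 \<noteq> l3 \<longrightarrow>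
               DeltaQ_star Q U \<ge> trace Q - Max {l1, l2, l3})))
       \<and> ((trace Q - 2 * Max {l1, l2, l3} > 0 \<and>
            (\<exists>e1\<in>U. \<exists>e2\<in>U. \<exists>e3\<in>U.
               e1 \<bullet> e2 = 0 \<and> e1 \<bullet> e3 = 0 \<and> e2 \<bullet> e3 = 0)) \<longrightarrow>
           DeltaQ_star Q U \<ge> 2/3 * (trace Q - 2 * Max {l1, l2, l3}))"
proof -
  have sym: "transpose Q = Q" and psd: "\<And>x. 0 \<le> x \<bullet> (Q *v x)"
    using assms(1) unfolding sym_psd_def by auto
  show ?thesis
  proof (intro conjI impI)
    assume "\<exists>e1\<in>U. \<exists>e2\<in>U. \<exists>e3\<in>U.
             e1 \<in> unit_eigvecs Q \<and> e2 \<in> unit_eigvecs Q \<and> e3 \<in> unit_eigvecs Q \<and>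
             e1 \<bullet> e2 = 0 \<and> e1 \<bullet> e3 = 0 \<and> e2 \<bullet> e3 = 0"
    then obtain e1 e2 e3 where h: "e1 \<in> U" "e2 \<in> U" "e3 \<in> U"
      "e1 \<in> unit_eigvecs Q" "e2 \<in> unit_eigvecs Q" "e3 \<in> unit_eigvecs Q"
      "e1 \<bullet> e2 = 0" "e1 \<bullet> e3 = 0" "e2 \<bullet> e3 = 0" by blast
    note p = part1[OF sym psd assms(2,3) h]
    show "l1 = l2 \<and> l2 = l3 \<and> l1 > 0 \<Longrightarrow> DeltaQ_star Q U \<ge> 2/3 * l1" using p by blast
    show "l1 = l2 \<and> l1 \<noteq> l3 \<and> l3 > 0 \<Longrightarrow> DeltaQ_star Q U \<ge> min (l1 + l2) l3" using p by blast
    show "l1 \<noteq> l2 \<and> l1 \<noteq> l3 \<and> l2 \<noteq> l3 \<Longrightarrow> DeltaQ_star Q U \<ge> trace Q - Max {l1, l2, l3}"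
      using p by blast
  next
    assume "trace Q - 2 * Max {l1, l2, l3} > 0 \<and>
            (\<exists>e1\<in>U. \<exists>e2\<in>U. \<exists>e3\<in>U. e1 \<bullet> e2 = 0 \<and> e1 \<bullet> e3 = 0 \<and> e2 \<bullet> e3 = 0)"
    then obtain e1 e2 e3 where h: "e1 \<in> U" "e2 \<in> U" "e3 \<in> U"
      "e1 \<bullet> e2 = 0" "e1 \<bullet> e3 = 0" "e2 \<bullet> e3 = 0" by blast
    show "DeltaQ_star Q U \<ge> 2/3 * (trace Q - 2 * Max {l1, l2, l3})"
      by (rule part2[OF sym psd assms(2,3,4) h])
  qed
qed

end
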